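(* Let $N\ge 2$ and let $T_1,\dots,T_N>0$ be independent, identically distributed random variables on a probability space $(\Omega,\mathcal F,\mathbb P)$ with a continuous distribution function, with order statistics $T_{(1)}\le\cdots\le T_{(N)}$. Let $U_1,\dots,U_N$ be independent standard uniform random variables with order statistics $U_{(1)}\le\cdots\le U_{(N)}$. Let $C(s)$, $s=0,1,2,\dots$, be the income process of the pooled annuity fund described in the context. Fix constants $\varepsilon_1\in(0,1)$, $\varepsilon_2>0$ and $k\in\{1,2,\dots,N\}$. Then \[ \begin{split} &\mathbb{P}\left[(1+\varepsilon_2)C(0)\ge C(s)\ge(1-\varepsilon_1)C(0)\ \text{for all } s\in\{1,2,\dots,\lfloor T_{(k)}\rfloor\}\right]\\ \ge\ &\mathbb{P}\left[(1-\varepsilon_1)\tfrac{i-1}{N}+\varepsilon_1\ \ge\ U_{(i)}\ \ge\ (1+\varepsilon_2)\tfrac{\min\{i,N-1\}}{N}-\varepsilon_2\ \text{for all } i\in\{1,2,\dots,k\}\right], \end{split} \] where $\lfloor T_{(k)}\rfloor$ denotes the integer part of $T_{(k)}$.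
   Context: Pooled annuity fund: $N\ge2$ members, all aged $x\ge0$ at time $0$; member $i$ has future lifetime $T_i$ (from age $x$), the $T_i$ being i.i.d. with a continuous distribution. The number alive at age $x+t$ is $L_{x+t}=\sum_{i=1}^N \mathbf 1_{[T_i>t]}$ for $t\ge0$. The (true) survival probability is ${}_sp_{x+t}=\mathbb P[T_i>t+s\mid T_i>t]$, with $p_{x+t}:={}_1p_{x+t}$. A constant effective rate of return $R>-1$ per unit time is earned. The annuity factor is $\ddot a_{x+t}=1+\sum_{j=1}^\infty(1+R)^{-j}\,{}_jp_{x+t}$. Each member has account value $W(t)\ge0$, with constant $W(0)>0$, and withdraws income $C(t)=W(t)/\ddot a_{x+t}$ at $t=0,1,2,\dots$. The longevity credit paid at time $t+1$ to each member alive at $t+1$ is $M(t+1)=(W(t)-C(t))(1+R)(L_{x+t}-L_{x+t+1})/L_{x+t+1}$ if $L_{x+t+1}>0$, and the account value of a surviving member at time $t+1$ is $W(t+1)=(W(t)-C(t))(1+R)+M(t+1)$ (all members are identical, so $W(t)$ and $C(t)$ are common to all survivors; the fund ceases if nobody is alive). *)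

theory Defs
  imports "HOL-Probability.Probability"
begin

text \<open>k-th order statistic (1-indexed, k in 1..N) of the values x 0, ..., x (N-1).\<close>
definition order_stat :: "nat \<Rightarrow> (nat \<Rightarrow> real) \<Rightarrow> nat \<Rightarrow> real" where
  "order_stat N x k = sort (map x [0..<N]) ! (k - 1)"

text \<open>Pooled annuity fund. S t = P[T_i > t] is the (unconditional) survival function
  of the future lifetime from age x; L t is the number of members alive at age x+t.\<close>

definition surv_prob :: "(real \<Rightarrow> real) \<Rightarrow> real \<Rightarrow> real \<Rightarrow> real" where
  "surv_prob S t s = S (t + s) / S t"

definition annuity_factor :: "real \<Rightarrow> (real \<Rightarrow> real) \<Rightarrow> real \<Rightarrow> real" where
  "annuity_factor R S t = 1 + (\<Sum>j. inverse ((1 + R) ^ Suc j) * surv_prob S t (real (Suc j)))"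

fun fund_W :: "real \<Rightarrow> (real \<Rightarrow> real) \<Rightarrow> (nat \<Rightarrow> nat) \<Rightarrow> real \<Rightarrow> nat \<Rightarrow> real" where
  "fund_W R S L W0 0 = W0"
| "fund_W R S L W0 (Suc t) =
     (let w = fund_W R S L W0 t;
          c = w / annuity_factor R S (real t);
          m = (w - c) * (1 + R) * (real (L t) - real (L (Suc t))) / real (L (Suc t))
      in if L (Suc t) > 0 then (w - c) * (1 + R) + m else 0)"

definition fund_C :: "real \<Rightarrow> (real \<Rightarrow> real) \<Rightarrow> (nat \<Rightarrow> nat) \<Rightarrow> real \<Rightarrow> nat \<Rightarrow> real" where
  "fund_C R S L W0 t = fund_W R S L W0 t / annuity_factor R S (real t)"

end

theory Submission
  imports Defs
begin

lemma sorted_nth_P: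
  fixes ys :: "real list"
  assumes "sorted ys" "i < length ys" and down: "\<And>y y'. P y \<Longrightarrow> y' \<le> y \<Longrightarrow> P y'"
  shows "P (ys ! i) \<longleftrightarrow> i < card {j. j < length ys \<and> P (ys ! j)}"
proof
  assume "P (ys ! i)"
  then have "{..i} \<subseteq> {j. j < length ys \<and> P (ys ! j)}"
    using assms by (auto intro: down simp: sorted_iff_nth_mono)
  from card_mono[OF _ this] show "i < card {j. j < length ys \<and> P (ys ! j)}" by simp
next
  assume c: "i < card {j. j < length ys \<and> P (ys ! j)}"
  show "P (ys ! i)"
  proof (rule ccontr)
    assume np: "\<not> P (ys ! i)"
    have "{j. j < length ys \<and> P (ys ! j)} \<subseteq> {..<i}"
    proof
      fix j assume j: "j \<in> {j. j < length ys \<and> P (ys ! j)}"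
      show "j \<in> {..<i}"
      proof (rule ccontr)
        assume "j \<notin> {..<i}"
        then have "ys ! i \<le> ys ! j" using j assms by (auto simp: sorted_iff_nth_mono)
        with j np down show False by auto
      qed
    qed
    from card_mono[OF _ this] c show False by simp
  qed
qed

lemma card_filter_sort:
  "card {j. j < N \<and> P (sort (map x [0..<N]) ! j)} = card {j. j < N \<and> P (x j)}"
proof -
  have "card {j. j < N \<and> P (sort (map x [0..<N]) ! j)} = length (filter P (sort (map x [0..<N])))"
    by (subst length_filter_conv_card) simp
  also have "\<dots> = length (filter P (map x [0..<N]))"
    by (metis mset_filter mset_sort size_mset)
  also have "\<dots> = card {j. j < N \<and> P (x j)}"
    by (subst length_filter_conv_card) (auto intro!: arg_cong[where f=card])
  finally show ?thesis .
qed

lemma os_P: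
  assumes "1 \<le> i" "i \<le> N" and down: "\<And>y y'. P y \<Longrightarrow> y' \<le> y \<Longrightarrow> P y'"
  shows "P (order_stat N x i) \<longleftrightarrow> i \<le> card {j. j < N \<and> P (x j)}"
proof -
  have "P (order_stat N x i) \<longleftrightarrow> i - 1 < card {j. j < N \<and> P (sort (map x [0..<N]) ! j)}"
    unfolding order_stat_def using assms
    by (subst sorted_nth_P[where P=P]) auto
  then show ?thesis using assms(1) by (simp add: card_filter_sort, linarith)
qed

lemma os_le: "1 \<le> i \<Longrightarrow> i \<le> N \<Longrightarrow> order_stat N x i \<le> a \<longleftrightarrow> i \<le> card {j. j < N \<and> x j \<le> a}"
  by (rule os_P[where P="\<lambda>y. y \<le> a"]) auto

lemma os_less: "1 \<le> i \<Longrightarrow> i \<le> N \<Longrightarrow> order_stat N x i < a \<longleftrightarrow> i \<le> card {j. j < N \<and> x j < a}"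
  by (rule os_P[where P="\<lambda>y. y < a"]) auto

lemma os_cong: "(\<And>j. j < N \<Longrightarrow> x j = y j) \<Longrightarrow> order_stat N x i = order_stat N y i"
  unfolding order_stat_def by (metis (mono_tags, lifting) atLeastLessThan_iff map_eq_conv set_upt)

lemma card_sum: fixes N :: nat shows "real (card {j. j < N \<and> P j}) = (\<Sum>j<N. if P j then 1 else 0)"
proof (induction N)
  case 0 then show ?case by simp
next
  case (Suc N)
  have "{j. j < Suc N \<and> P j} = {j. j < N \<and> P j} \<union> (if P N then {N} else {})" by (auto simp: less_Suc_eq)
  then have "card {j. j < Suc N \<and> P j} = card {j. j < N \<and> P j} + (if P N then 1 else 0)" by auto
  then show ?case using Suc by simp
qed

lemma pred_card_real:
  fixes N :: nat
  assumes "\<And>j. j < N \<Longrightarrow> Measurable.pred M (Q j)"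
  shows "(\<lambda>x. real (card {j. j < N \<and> Q j x})) \<in> borel_measurable M"
proof -
  have "(\<lambda>x. \<Sum>j<N. if Q j x then 1 else 0::real) \<in> borel_measurable M"
  proof (rule borel_measurable_sum)
    fix j assume "j \<in> {..<N}"
    then have "Measurable.pred M (Q j)" using assms by simp
    show "(\<lambda>x. if Q j x then 1 else 0::real) \<in> borel_measurable M"
    proof (rule measurable_If)
      show "{x \<in> space M. Q j x} \<in> sets M" using \<open>Measurable.pred M (Q j)\<close> unfolding pred_def .
    qed simp_all
  qed
  then show ?thesis by (simp only: card_sum)
qed

lemma pred_card_le:
  fixes N :: nat
  assumes "\<And>j. j < N \<Longrightarrow> Measurable.pred M (Q j)"
  shows "Measurable.pred M (\<lambda>x. i \<le> card {j. j < N \<and> Q j x})"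
proof -
  have "{x \<in> space M. real i \<le> real (card {j. j < N \<and> Q j x})} \<in> sets M"
    by (rule borel_measurable_le[OF borel_measurable_const pred_card_real[OF assms]])
  then show ?thesis unfolding pred_def by (simp only: of_nat_le_iff)
qed

lemma pred_card_eq:
  fixes N :: nat
  assumes "\<And>j. j < N \<Longrightarrow> Measurable.pred M (Q j)"
  shows "Measurable.pred M (\<lambda>x. card {j. j < N \<and> Q j x} = l)"
proof -
  have "{x \<in> space M. real (card {j. j < N \<and> Q j x}) = real l} \<in> sets M"
    by (rule borel_measurable_eq[OF pred_card_real[OF assms] borel_measurable_const])
  then show ?thesis unfolding pred_def by (simp only: of_nat_eq_iff)
qed

lemma det:
  fixes T :: "nat \<Rightarrow> real" and F :: "real \<Rightarrow> real"
  assumes Fmono: "\<And>x y. x \<le> y \<Longrightarrow> F x \<le> F y" and F0: "\<And>x. F x \<ge> 0"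
    and k: "1 \<le> k" "k \<le> N" and e1: "0 < e1" "e1 < 1" and e2: "0 < e2" and C0: "C0 > 0"
    and noties: "\<And>j. j < N \<Longrightarrow> T j \<noteq> real s"
    and g: "\<forall>i\<in>{1..k}. (1 - e1) * (real i - 1) / real N + e1 \<ge> order_stat N (\<lambda>j. F (T j)) i \<and>
        order_stat N (\<lambda>j. F (T j)) i \<ge> (1 + e2) * real (min i (N - 1)) / real N - e2"
    and sk: "\<not> k \<le> card {j. j < N \<and> T j < real s}"
  shows "card {j. j < N \<and> T j > real s} > 0 \<and>
    (1 + e2) * C0 \<ge> C0 * real N * (1 - F (real s)) / real (card {j. j < N \<and> T j > real s}) \<and>
    C0 * real N * (1 - F (real s)) / real (card {j. j < N \<and> T j > real s}) \<ge> (1 - e1) * C0"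
proof -
  define m where "m = card {j. j < N \<and> T j \<le> real s}"
  define l where "l = card {j. j < N \<and> T j > real s}"
  define f where "f = F (real s)"
  have "{j. j < N \<and> T j \<le> real s} = {j. j < N \<and> T j < real s}"
  proof (rule Collect_cong)
    fix j show "(j < N \<and> T j \<le> real s) = (j < N \<and> T j < real s)"
      using noties[of j] by linarith
  qed
  then have mk: "m < k" using sk unfolding m_def by simp
  have "{j. j < N \<and> T j > real s} = {..<N} - {j. j < N \<and> T j \<le> real s}" by auto
  then have "l = N - m" unfolding l_def m_def by (simp add: card_Diff_subset subset_eq)
  then have lm: "real l = real N - real m" and lpos: "l > 0" using mk k by auto
  have Npos: "real N > 0" using k by simp
  have up: "f \<le> (1 - e1) * real m / real N + e1"
  proof (rule ccontr)
    assume "\<not> ?thesis"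
    then have lt: "(1 - e1) * real m / real N + e1 < f" by simp
    define A where "A = (1 - e1) * (real (m+1) - 1) / real N + e1"
    have Aeq: "A = (1 - e1) * real m / real N + e1" unfolding A_def by simp
    have "m+1 \<in> {1..k}" using mk by simp
    from bspec[OF g this] have h3: "order_stat N (\<lambda>j. F (T j)) (m+1) \<le> A" unfolding A_def by simp
    have h1: "1 \<le> m + 1" and h2: "m + 1 \<le> N" using mk k by auto
    have c1: "m + 1 \<le> card {j. j < N \<and> F (T j) \<le> A}" using os_le[OF h1 h2, THEN iffD1, OF h3] .
    have "{j. j < N \<and> F (T j) \<le> A} \<subseteq> {j. j < N \<and> T j \<le> real s}"
    proof safe
      fix j assume "j < N" "F (T j) \<le> A"
      show "T j \<le> real s"
      proof (rule ccontr)
        assume "\<not> T j \<le> real s"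
        then have "F (real s) \<le> F (T j)" using Fmono by simp
        then show False using \<open>F (T j) \<le> A\<close> lt Aeq unfolding f_def by simp
      qed
    qed
    from card_mono[OF _ this] c1 show False unfolding m_def by simp
  qed
  have lo: "f \<ge> (1 + e2) * real m / real N - e2"
  proof (cases "m = 0")
    case True then show ?thesis using F0[of "real s"] e2 unfolding f_def by simp
  next
    case False
    show ?thesis
    proof (rule ccontr)
      assume "\<not> ?thesis"
      then have lt: "f < (1 + e2) * real m / real N - e2" by simp
      define B where "B = (1 + e2) * real (min m (N - 1)) / real N - e2"
      have Beq: "B = (1 + e2) * real m / real N - e2" unfolding B_def using mk k by simp
      have "m \<in> {1..k}" using mk False by simp
      from bspec[OF g this] have h3: "\<not> order_stat N (\<lambda>j. F (T j)) m < B" unfolding B_def by (auto simp: not_less)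
      have h1: "1 \<le> m" and h2: "m \<le> N" using mk k False by auto
      have c1: "\<not> m \<le> card {j. j < N \<and> F (T j) < B}" using os_less[OF h1 h2] h3 by simp
      have "{j. j < N \<and> T j \<le> real s} \<subseteq> {j. j < N \<and> F (T j) < B}"
      proof safe
        fix j assume "j < N" "T j \<le> real s"
        then have "F (T j) \<le> f" using Fmono unfolding f_def by blast
        then show "F (T j) < B" using lt Beq by simp
      qed
      from card_mono[OF _ this] c1 show False unfolding m_def by simp
    qed
  qed
  have i1: "(1 + e2) * real l \<ge> real N * (1 - f)"
  proof -
    have "real N * f \<ge> (1 + e2) * real m - e2 * real N" using lo Npos by (simp add: field_simps)
    then show ?thesis unfolding lm by (simp add: algebra_simps)
  qed
  have i2: "real N * (1 - f) \<ge> (1 - e1) * real l"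
  proof -
    have "real N * f \<le> (1 - e1) * real m + e1 * real N" using up Npos by (simp add: field_simps)
    then show ?thesis unfolding lm by (simp add: algebra_simps)
  qed
  have lp: "real l > 0" using lpos by simp
  have "C0 * real N * (1 - f) / real l \<le> (1 + e2) * C0"
  proof -
    have "C0 * (real N * (1 - f)) \<le> C0 * ((1 + e2) * real l)" using i1 C0 by (intro mult_left_mono) auto
    then show ?thesis using lp by (simp add: divide_le_eq algebra_simps)
  qed
  moreover have "C0 * real N * (1 - f) / real l \<ge> (1 - e1) * C0"
  proof -
    have "C0 * ((1 - e1) * real l) \<le> C0 * (real N * (1 - f))" using i2 C0 by (intro mult_left_mono) auto
    then show ?thesis using lp by (simp add: le_divide_eq algebra_simps)
  qed
  ultimately show ?thesis using lpos unfolding l_def f_def by simp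
qed

locale fundloc =
  fixes R :: real and S :: "real \<Rightarrow> real"
  assumes R: "R > -1"
    and summ: "\<And>t::nat. summable (\<lambda>j. inverse ((1 + R) ^ Suc j) * surv_prob S (real t) (real (Suc j)))"
    and anti: "\<And>x y. x \<le> y \<Longrightarrow> S y \<le> S x"
    and nonneg: "\<And>x. S x \<ge> 0"
begin

definition v where "v t j = inverse ((1 + R) ^ Suc j) * surv_prob S (real t) (real (Suc j))"

lemma a_eq: "annuity_factor R S (real t) = 1 + suminf (v t)"
  unfolding annuity_factor_def v_def by simp

lemma v_nonneg: "v t j \<ge> 0"
  unfolding v_def surv_prob_def using R nonneg by (auto intro!: mult_nonneg_nonneg divide_nonneg_nonneg)

lemma a_ge1: "annuity_factor R S (real t) \<ge> 1"
  unfolding a_eq using suminf_nonneg[OF summ[folded v_def] v_nonneg] by simp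

lemma a_rec: "(annuity_factor R S (real t) - 1) * (1 + R) =
   S (real (Suc t)) / S (real t) * annuity_factor R S (real (Suc t))"
proof (cases "S (real t) = 0")
  case True
  then have "v t = (\<lambda>_. 0)" by (auto simp: v_def surv_prob_def fun_eq_iff)
  then show ?thesis using True by (simp add: a_eq)
next
  case St: False
  show ?thesis
  proof (cases "S (real (Suc t)) = 0")
    case True
    have "S (real t + real (Suc j)) = 0" for j
      using anti[of "real (Suc t)" "real t + real (Suc j)"] nonneg[of "real t + real (Suc j)"] True
      by auto
    then have "v t = (\<lambda>_. 0)" by (auto simp: v_def surv_prob_def fun_eq_iff)
    then show ?thesis using True by (simp add: a_eq)
  next
    case St1: False
    define c where "c = inverse (1 + R) * (S (real (Suc t)) / S (real t))"
    have sv: "summable (v t)" "summable (v (Suc t))" using summ[folded v_def] by auto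
    have vs: "v t (Suc j) = c * v (Suc t) j" for j
    proof -
      have e: "real t + real (Suc (Suc j)) = real (Suc t) + real (Suc j)" by simp
      have r: "1 + R > 0" using R by simp
      have aux: "inverse (q^Suc(Suc j)) * (x / a) = inverse q * (b / a) * (inverse (q^Suc j) * (x / b))"
        if "q \<noteq> 0" "a \<noteq> 0" "b \<noteq> 0" for q a b x :: real
        using that by (simp add: field_simps)
      show ?thesis unfolding v_def c_def surv_prob_def e using St St1 r
        by (intro aux) auto
    qed
    have v0: "v t 0 = c" unfolding v_def c_def surv_prob_def by (simp add: add.commute)
    have "suminf (v t) = v t 0 + (\<Sum>j. v t (Suc j))"
      using suminf_split_head[OF sv(1)] by simp
    also have "(\<Sum>j. v t (Suc j)) = c * suminf (v (Suc t))"
      unfolding vs by (rule suminf_mult[OF sv(2)])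
    finally have sumeq: "suminf (v t) = c * (1 + suminf (v (Suc t)))" using v0 by (simp add: algebra_simps)
    have r: "1 + R \<noteq> 0" using R by simp
    have cr: "c * (1 + R) = S (real (Suc t)) / S (real t)" unfolding c_def using r by simp
    have "(annuity_factor R S (real t) - 1) * (1 + R) = (c * (1 + R)) * (1 + suminf (v (Suc t)))"
      unfolding a_eq sumeq by (simp add: algebra_simps)
    then show ?thesis unfolding cr a_eq by simp
  qed
qed

lemma C_formula:
  fixes L :: "nat \<Rightarrow> nat"
  assumes Lanti: "\<And>t. L (Suc t) \<le> L t" and S0: "S 0 = 1"
  shows "0 < L s \<Longrightarrow> fund_C R S L W0 s = fund_C R S L W0 0 * real (L 0) * S (real s) / real (L s)"
proof (induction s)
  case 0
  then show ?case using S0 by simp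
next
  case (Suc t)
  have Lt: "0 < L t" using Suc.prems Lanti[of t] by linarith
  note IH = Suc.IH[OF Lt]
  define w where "w = fund_W R S L W0 t"
  define a where "a = annuity_factor R S (real t)"
  define a1 where "a1 = annuity_factor R S (real (Suc t))"
  define c where "c = w / a"
  have a1: "a \<ge> 1" "a1 \<ge> 1" unfolding a_def a1_def using a_ge1 by blast+
  have wc: "w - c = c * (a - 1)" unfolding c_def using a1 by (simp add: field_simps)
  have rec: "(a - 1) * (1 + R) = S (real (Suc t)) / S (real t) * a1"
    unfolding a_def a1_def by (rule a_rec)
  have W1: "fund_W R S L W0 (Suc t) = (w - c) * (1 + R) * real (L t) / real (L (Suc t))"
    using Suc.prems a_ge1[of t] unfolding w_def c_def a_def
    by (simp add: Let_def field_simps)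
  also have "\<dots> = c * ((a - 1) * (1 + R)) * real (L t) / real (L (Suc t))"
    unfolding wc by (simp add: algebra_simps)
  also have "\<dots> = c * (S (real (Suc t)) / S (real t)) * a1 * real (L t) / real (L (Suc t))"
    unfolding rec by (simp add: algebra_simps)
  finally have cW: "fund_C R S L W0 (Suc t) = c * (S (real (Suc t)) / S (real t)) * real (L t) / real (L (Suc t))"
    unfolding fund_C_def a1_def[symmetric] using a1 by (simp add: field_simps)
  moreover have cc: "c = fund_C R S L W0 0 * real (L 0) * S (real t) / real (L t)"
    using IH unfolding c_def w_def a_def fund_C_def by simp
  show ?case
  proof (cases "S (real t) = 0")
    case True
    then have "S (real (Suc t)) = 0" using anti[of "real t" "real (Suc t)"] nonneg[of "real (Suc t)"] by simp
    then show ?thesis using True cW by simp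
  next
    case False
    then show ?thesis using cW cc Lt by (simp add: field_simps)
  qed
qed

lemma C_zero: "L (Suc t) = 0 \<Longrightarrow> fund_C R S L W0 (Suc t) = 0"
  unfolding fund_C_def by (simp add: Let_def)

lemma C_eq:
  fixes L :: "nat \<Rightarrow> nat"
  assumes Lanti: "\<And>t. L (Suc t) \<le> L t" and S0: "S 0 = 1" and L0: "L 0 = N" and s: "1 \<le> s"
  shows "fund_C R S L W0 s = (if 0 < L s then fund_C R S L W0 0 * real N * S (real s) / real (L s) else 0)"
proof (cases "0 < L s")
  case True then show ?thesis using C_formula[OF Lanti S0 True] L0 by simp
next
  case False
  then obtain t where "s = Suc t" "L (Suc t) = 0" using s by (cases s) auto
  then show ?thesis using C_zero[of L t] by simp
qed

lemma C0_eq: "fund_C R S L W0 0 = W0 / annuity_factor R S 0"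
  unfolding fund_C_def by simp

end
lemma pred_constI: "Measurable.pred M (\<lambda>x. c)"
proof (cases c)
  case True
  have "{x \<in> space M. c} = space M" using True by blast
  then show ?thesis unfolding pred_def by (simp only: sets.top)
next
  case False
  have "{x \<in> space M. c} = {}" using False by blast
  then show ?thesis unfolding pred_def by (simp only: sets.empty_sets)
qed

abbreviation UNI where "UNI \<equiv> uniform_measure lborel {0..1::real}"

lemma UNI_rd: "real_distribution UNI"
  unfolding real_distribution_def real_distribution_axioms_def
  by (auto intro!: prob_space_uniform_measure)

lemma cdf_UNI: "cdf UNI u = max 0 (min 1 u)"
proof -
  have "cdf UNI u = measure lborel ({0..1} \<inter> {..u})"
    unfolding cdf_def by (subst measure_uniform_measure) auto
  also have "\<dots> = max 0 (min 1 u)"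
  proof (cases "u < 0")
    case True then have "{0..1} \<inter> {..u} = ({}::real set)" by auto
    then show ?thesis using True by simp
  next
    case False then have "{0..1} \<inter> {..u} = {0..min 1 u}" by auto
    then show ?thesis using False by simp
  qed
  finally show ?thesis .
qed

lemma PIT:
  assumes D: "real_distribution D" and cont: "\<And>y. isCont (cdf D) y"
  shows "distr D borel (cdf D) = UNI"
proof -
  interpret real_distribution D by fact
  define F where "F = cdf D"
  have Fm: "F \<in> borel_measurable borel"
    unfolding F_def by (intro borel_measurable_continuous_onI continuous_at_imp_continuous_on) (use cont in auto)
  have Fmono: "x \<le> y \<Longrightarrow> F x \<le> F y" for x y unfolding F_def by (rule cdf_nondecreasing)
  have F01: "0 \<le> F x" "F x \<le> 1" for x unfolding F_def by (simp_all add: cdf_nonneg cdf_bounded_prob)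
  have key: "measure D {x. F x \<le> u} = max 0 (min 1 u)" for u
  proof -
    consider "u < 0" | "u \<ge> 1" | "0 \<le> u" "u < 1" by linarith
    then show ?thesis
    proof cases
      case 1 then have "{x. F x \<le> u} = {}" using F01 by (auto simp: not_le intro: less_le_trans)
      then show ?thesis using 1 by simp
    next
      case 2 then have "{x. F x \<le> u} = UNIV" using F01 by (auto intro: order_trans)
      then show ?thesis using 2 prob_space by simp
    next
      case 3
      define A where "A = {x. F x \<le> u}"
      show ?thesis
      proof (cases "A = {}")
        case True
        have "u = 0"
        proof (rule ccontr)
          assume "u \<noteq> 0" then have "u > 0" using 3 by simp
          have "\<forall>\<^sub>F x in at_bot. F x < u"
            using order_tendstoD(2)[OF cdf_lim_at_bot \<open>u > 0\<close>] unfolding F_def .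
          then obtain x where "F x < u" by (metis eventually_at_bot_linorder order_refl)
          then show False using True unfolding A_def by (metis (mono_tags) empty_Collect_eq less_imp_le)
        qed
        then show ?thesis using True unfolding A_def by simp
      next
        case False
        have "\<forall>\<^sub>F x in at_top. F x > u"
          using order_tendstoD(1)[OF cdf_lim_at_top_prob \<open>u < 1\<close>] unfolding F_def .
        then obtain b where b: "\<And>x. x \<ge> b \<Longrightarrow> F x > u" by (auto simp: eventually_at_top_linorder)
        have bdd: "bdd_above A" unfolding A_def bdd_above_def
          using b by (metis linorder_not_le mem_Collect_eq nle_le)
        have cl: "closed A" unfolding A_def
          by (intro closed_Collect_le continuous_at_imp_continuous_on) (use cont in \<open>auto simp: F_def\<close>)
        define q where "q = Sup A"
        have qA: "q \<in> A" unfolding q_def using closed_contains_Sup[OF False bdd cl] .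
        have Aeq: "A = {..q}"
        proof
          show "A \<subseteq> {..q}" unfolding q_def using bdd by (auto intro: cSup_upper)
          show "{..q} \<subseteq> A" using qA Fmono unfolding A_def by (auto intro: order_trans)
        qed
        have Fq: "F q = u"
        proof (rule ccontr)
          assume "F q \<noteq> u" then have lt: "F q < u" using qA unfolding A_def by simp
          have "F \<midarrow>q\<rightarrow> F q" using cont[of q] unfolding F_def isCont_def .
          from LIM_D[OF this, of "u - F q"] lt obtain s where s: "s > 0"
            "\<And>x. x \<noteq> q \<and> norm (x - q) < s \<longrightarrow> norm (F x - F q) < u - F q" by auto
          have "F (q + s/2) < u" using s(2)[of "q + s/2"] s(1) by auto
          then have "q + s/2 \<in> A" unfolding A_def by simp
          then show False using Aeq s(1) by auto
        qed
        have "measure D A = F q" unfolding Aeq F_def cdf_def ..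
        then show ?thesis using Fq 3 unfolding A_def by simp
      qed
    qed
  qed
  have rd: "real_distribution (distr D borel F)"
    by (rule real_distribution_distr) (use Fm in simp)
  have "cdf (distr D borel F) = cdf UNI"
  proof
    fix u
    have "cdf (distr D borel F) u = measure D (F -` {..u} \<inter> space D)"
      unfolding cdf_def using Fm by (subst measure_distr) auto
    also have "F -` {..u} \<inter> space D = {x. F x \<le> u}" by auto
    finally show "cdf (distr D borel F) u = cdf UNI u" using key cdf_UNI by simp
  qed
  from cdf_unique[OF rd UNI_rd this] show ?thesis unfolding F_def .
qed

theorem theorem1:
  fixes M :: "'a measure" and T :: "nat \<Rightarrow> 'a \<Rightarrow> real"
    and M' :: "'b measure" and U :: "nat \<Rightarrow> 'b \<Rightarrow> real"
    and N k :: nat and R W0 \<epsilon>1 \<epsilon>2 :: real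
  assumes "prob_space M"
    and N: "N \<ge> 2"
    and T_rv: "\<And>i. i < N \<Longrightarrow> T i \<in> borel_measurable M"
    and T_indep: "prob_space.indep_vars M (\<lambda>_. borel) T {0..<N}"
    and T_id: "\<And>i. i < N \<Longrightarrow> distr M borel (T i) = distr M borel (T 0)"
    and T_cont: "\<And>y. isCont (cdf (distr M borel (T 0))) y"
    and T_pos: "\<And>i \<omega>. i < N \<Longrightarrow> \<omega> \<in> space M \<Longrightarrow> T i \<omega> > 0"
    and "prob_space M'"
    and U_rv: "\<And>i. i < N \<Longrightarrow> U i \<in> borel_measurable M'"
    and U_indep: "prob_space.indep_vars M' (\<lambda>_. borel) U {0..<N}"
    and U_unif: "\<And>i. i < N \<Longrightarrow> distr M' lborel (U i) = uniform_measure lborel {0..1}"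
    and R: "R > -1"
    and W0: "W0 > 0"
    and summ: "\<And>t::nat. summable (\<lambda>j. inverse ((1 + R) ^ Suc j) *
                 surv_prob (\<lambda>u. measure M {\<omega> \<in> space M. T 0 \<omega> > u}) (real t) (real (Suc j)))"
    and e1: "0 < \<epsilon>1" "\<epsilon>1 < 1"
    and e2: "\<epsilon>2 > 0"
    and k: "1 \<le> k" "k \<le> N"
  shows
    "measure M {\<omega> \<in> space M. \<forall>s::nat. 1 \<le> s \<and> int s \<le> \<lfloor>order_stat N (\<lambda>i. T i \<omega>) k\<rfloor> \<longrightarrow>
        (let S = (\<lambda>u. measure M {\<omega>' \<in> space M. T 0 \<omega>' > u});
             L = (\<lambda>t::nat. card {i. i < N \<and> T i \<omega> > real t});
             C = fund_C R S L W0
         in (1 + \<epsilon>2) * C 0 \<ge> C s \<and> C s \<ge> (1 - \<epsilon>1) * C 0)}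
     \<ge> measure M' {\<omega> \<in> space M'. \<forall>i\<in>{1..k}.
        (1 - \<epsilon>1) * (real i - 1) / real N + \<epsilon>1 \<ge> order_stat N (\<lambda>j. U j \<omega>) i \<and>
        order_stat N (\<lambda>j. U j \<omega>) i \<ge> (1 + \<epsilon>2) * real (min i (N - 1)) / real N - \<epsilon>2}"
proof -
  interpret P: prob_space M by fact
  interpret P': prob_space M' by fact
  define I where "I = {0..<N}"
  have Ine: "I \<noteq> {}" using N by (auto simp: I_def)
  have N0: "0 < N" using N by simp
  have k1: "1 \<le> k" and kN: "k \<le> N" using k by auto
  have rvT0: "T 0 \<in> borel_measurable M" using T_rv[OF N0] .
  define D where "D = distr M borel (T 0)"
  have Drd: "real_distribution D" unfolding D_def by (rule P.real_distribution_distr[OF rvT0])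
  interpret Dr: real_distribution D by (rule Drd)
  define F where "F = cdf D"
  have Fcont: "\<And>y. isCont F y" using T_cont unfolding F_def D_def .
  have Fm: "F \<in> borel_measurable borel"
    by (intro borel_measurable_continuous_onI continuous_at_imp_continuous_on) (use Fcont in auto)
  have Fmono: "\<And>x y. x \<le> y \<Longrightarrow> F x \<le> F y" unfolding F_def by (rule Dr.cdf_nondecreasing)
  have F0: "\<And>x. F x \<ge> 0" unfolding F_def by (rule Dr.cdf_nonneg)
  have F1: "\<And>x. F x \<le> 1" unfolding F_def by (rule Dr.cdf_bounded_prob)
  have setle: "{\<omega> \<in> space M. T 0 \<omega> \<le> u} \<in> sets M" for u
    by (rule borel_measurable_le[OF rvT0 borel_measurable_const])
  have Fval: "F u = measure M {\<omega> \<in> space M. T 0 \<omega> \<le> u}" for u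
  proof -
    have "F u = measure M (T 0 -` {..u} \<inter> space M)"
      unfolding F_def cdf_def D_def by (rule measure_distr[OF rvT0]) simp
    also have "T 0 -` {..u} \<inter> space M = {\<omega> \<in> space M. T 0 \<omega> \<le> u}" by auto
    finally show ?thesis .
  qed
  define S where "S = (\<lambda>u. measure M {\<omega>' \<in> space M. T 0 \<omega>' > u})"
  have S_eq: "S u = 1 - F u" for u
  proof -
    have "{\<omega>' \<in> space M. T 0 \<omega>' > u} = space M - {\<omega> \<in> space M. T 0 \<omega> \<le> u}" by auto
    then show ?thesis unfolding S_def Fval using P.prob_compl[OF setle[of u]] by simp
  qed
  have S0: "S 0 = 1"
  proof -
    have e: "{\<omega> \<in> space M. T 0 \<omega> \<le> 0} = {}" using T_pos[OF N0] by (auto simp: not_le)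
    show ?thesis unfolding S_eq Fval e by simp
  qed
  interpret fundloc R S
  proof
    show "R > -1" by (rule R)
    show "summable (\<lambda>j. inverse ((1 + R) ^ Suc j) * surv_prob S (real t) (real (Suc j)))" for t
      using summ[of t] unfolding S_def .
    show "S y \<le> S x" if "x \<le> y" for x y using Fmono[OF that] unfolding S_eq by simp
    show "S x \<ge> 0" for x using F1[of x] unfolding S_eq by simp
  qed
  define C0 where "C0 = W0 / annuity_factor R S 0"
  have C0pos: "C0 > 0" unfolding C0_def using W0 a_ge1[of 0] by simp
  define cc where "cc s l = (if 0 < l then C0 * real N * S (real s) / real l else 0)" for s l :: nat
  define \<Phi> where "\<Phi> s l = ((1 + \<epsilon>2) * C0 \<ge> cc s l \<and> cc s l \<ge> (1 - \<epsilon>1) * C0)" for s l :: nat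
  define Q' where "Q' \<omega> = (\<forall>s::nat. 1 \<le> s \<and> \<not> k \<le> card {j. j < N \<and> T j \<omega> < real s} \<longrightarrow>
      \<Phi> s (card {j. j < N \<and> T j \<omega> > real s}))" for \<omega>
  define LHS where "LHS = {\<omega> \<in> space M. \<forall>s::nat. 1 \<le> s \<and> int s \<le> \<lfloor>order_stat N (\<lambda>i. T i \<omega>) k\<rfloor> \<longrightarrow>
        (let S = (\<lambda>u. measure M {\<omega>' \<in> space M. T 0 \<omega>' > u});
             L = (\<lambda>t::nat. card {i. i < N \<and> T i \<omega> > real t});
             C = fund_C R S L W0
         in (1 + \<epsilon>2) * C 0 \<ge> C s \<and> C s \<ge> (1 - \<epsilon>1) * C 0)}"
  have LHS_eq: "LHS = {\<omega> \<in> space M. Q' \<omega>}"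
    unfolding LHS_def
  proof (rule Collect_cong)
    fix \<omega>
    show "(\<omega> \<in> space M \<and> (\<forall>s::nat. 1 \<le> s \<and> int s \<le> \<lfloor>order_stat N (\<lambda>i. T i \<omega>) k\<rfloor> \<longrightarrow>
        (let S = (\<lambda>u. measure M {\<omega>' \<in> space M. T 0 \<omega>' > u});
             L = (\<lambda>t::nat. card {i. i < N \<and> T i \<omega> > real t});
             C = fund_C R S L W0
         in (1 + \<epsilon>2) * C 0 \<ge> C s \<and> C s \<ge> (1 - \<epsilon>1) * C 0))) = (\<omega> \<in> space M \<and> Q' \<omega>)"
    proof (cases "\<omega> \<in> space M")
      case False then show ?thesis by simp
    next
      case om: True
      define L where "L = (\<lambda>t::nat. card {i. i < N \<and> T i \<omega> > real t})"
      have Lanti: "L (Suc t) \<le> L t" for t unfolding L_def by (rule card_mono) auto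
      have L0: "L 0 = N"
      proof -
        have "{i. i < N \<and> T i \<omega> > real 0} = {..<N}" using T_pos[OF _ om] by auto
        then show ?thesis unfolding L_def by simp
      qed
      have Ceq: "fund_C R S L W0 s = cc s (L s)" if "1 \<le> s" for s
        unfolding C_eq[OF Lanti S0 L0 that] cc_def C0_eq C0_def by simp
      have Lfold: "card {j. j < N \<and> T j \<omega> > real s} = L s" for s unfolding L_def ..
      have C0eq: "fund_C R S L W0 0 = C0" unfolding C0_eq C0_def ..
      have fl: "(int s \<le> \<lfloor>order_stat N (\<lambda>i. T i \<omega>) k\<rfloor>) = (\<not> k \<le> card {j. j < N \<and> T j \<omega> < real s})" for s :: nat
      proof -
        have "(int s \<le> \<lfloor>order_stat N (\<lambda>i. T i \<omega>) k\<rfloor>) = (\<not> order_stat N (\<lambda>i. T i \<omega>) k < real s)"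
          by (simp add: le_floor_iff not_less)
        also have "\<dots> = (\<not> k \<le> card {j. j < N \<and> T j \<omega> < real s})" using os_less[OF k1 kN] by simp
        finally show ?thesis .
      qed
      have "(\<forall>s::nat. 1 \<le> s \<and> int s \<le> \<lfloor>order_stat N (\<lambda>i. T i \<omega>) k\<rfloor> \<longrightarrow>
        (let S = (\<lambda>u. measure M {\<omega>' \<in> space M. T 0 \<omega>' > u});
             L = (\<lambda>t::nat. card {i. i < N \<and> T i \<omega> > real t});
             C = fund_C R S L W0
         in (1 + \<epsilon>2) * C 0 \<ge> C s \<and> C s \<ge> (1 - \<epsilon>1) * C 0)) = Q' \<omega>"
        unfolding Let_def S_def[symmetric] L_def[symmetric] Q'_def \<Phi>_def fl
        by (intro all_cong1 imp_cong refl) (auto simp: Ceq C0eq Lfold)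
      then show ?thesis using om by simp
    qed
  qed
  have pTl: "Measurable.pred M (\<lambda>\<omega>. T j \<omega> < a)" if "j < N" for j a
    unfolding pred_def by (rule borel_measurable_less[OF T_rv[OF that] borel_measurable_const])
  have pTg: "Measurable.pred M (\<lambda>\<omega>. a < T j \<omega>)" if "j < N" for j a
    unfolding pred_def by (rule borel_measurable_less[OF borel_measurable_const T_rv[OF that]])
  have Qm: "Measurable.pred M Q'"
  proof -
    have "Measurable.pred M (\<lambda>\<omega>. 1 \<le> s \<and> \<not> k \<le> card {j. j < N \<and> T j \<omega> < real s} \<longrightarrow>
        \<Phi> s (card {j. j < N \<and> T j \<omega> > real s}))" for s :: nat
    proof -
      have a: "Measurable.pred M (\<lambda>\<omega>. 1 \<le> s \<and> \<not> k \<le> card {j. j < N \<and> T j \<omega> < real s})"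
        by (intro pred_intros_logic(3) pred_intros_logic(2) pred_constI pred_card_le pTl) simp_all
      have b0: "Measurable.pred M (\<lambda>\<omega>. \<forall>l. card {j. j < N \<and> T j \<omega> > real s} = l \<longrightarrow> \<Phi> s l)"
        by (intro pred_intros_countable(1) pred_intros_logic(4) pred_constI pred_card_eq pTg) simp_all
      have e: "(\<lambda>\<omega>. \<forall>l. card {j. j < N \<and> T j \<omega> > real s} = l \<longrightarrow> \<Phi> s l) =
          (\<lambda>\<omega>. \<Phi> s (card {j. j < N \<and> T j \<omega> > real s}))" by auto
      from a b0[unfolded e] show ?thesis by (rule pred_intros_logic(4))
    qed
    then show ?thesis unfolding Q'_def by (rule pred_intros_countable(1))
  qed
  have LHSm: "LHS \<in> sets M" using Qm unfolding LHS_eq pred_def .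
  have null1: "AE \<omega> in M. T j \<omega> \<noteq> real s" if "j < N" for j s
  proof -
    have rv: "T j \<in> borel_measurable M" using T_rv[OF that] .
    have ev: "{\<omega> \<in> space M. T j \<omega> = real s} \<in> sets M"
      by (rule borel_measurable_eq[OF rv borel_measurable_const])
    have "P.prob {\<omega> \<in> space M. T j \<omega> = real s} = measure (distr M borel (T j)) {real s}"
    proof -
      have "measure (distr M borel (T j)) {real s} = measure M (T j -` {real s} \<inter> space M)"
        by (rule measure_distr[OF rv]) simp
      also have "T j -` {real s} \<inter> space M = {\<omega> \<in> space M. T j \<omega> = real s}" by auto
      finally show ?thesis by simp
    qed
    also have "\<dots> = measure D {real s}" unfolding D_def T_id[OF that] ..
    also have "\<dots> = 0" using Dr.isCont_cdf[of "real s"] Fcont[of "real s"] unfolding F_def by simp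
    finally have "P.prob {\<omega> \<in> space M. T j \<omega> = real s} = 0" .
    then have "AE \<omega> in M. \<omega> \<notin> {\<omega> \<in> space M. T j \<omega> = real s}" using P.prob_eq_0[OF ev] by simp
    then show ?thesis by (rule AE_mp[OF _ AE_I2]) auto
  qed
  have noties: "AE \<omega> in M. \<forall>s::nat. \<forall>j. j < N \<longrightarrow> T j \<omega> \<noteq> real s"
  proof -
    have "AE \<omega> in M. \<forall>j. j < N \<longrightarrow> T j \<omega> \<noteq> real s" for s :: nat
      unfolding AE_all_countable
    proof
      fix j show "AE \<omega> in M. j < N \<longrightarrow> T j \<omega> \<noteq> real s"
        by (cases "j < N") (use null1 in auto)
    qed
    then show ?thesis unfolding AE_all_countable by blast
  qed
  define PI where "PI = PiM I (\<lambda>_. borel :: real measure)"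
  define Vv where "Vv = (\<lambda>\<omega>. \<lambda>i\<in>I. F (T i \<omega>))"
  define Uv where "Uv = (\<lambda>\<omega>. \<lambda>i\<in>I. U i \<omega>)"
  define g where "g x = (\<forall>i\<in>{1..k}. (1 - \<epsilon>1) * (real i - 1) / real N + \<epsilon>1 \<ge> order_stat N x i \<and>
        order_stat N x i \<ge> (1 + \<epsilon>2) * real (min i (N - 1)) / real N - \<epsilon>2)" for x
  define G where "G = {x \<in> space PI. g x}"
  have Gm: "G \<in> sets PI"
  proof -
    have geq: "g = (\<lambda>x. \<forall>i\<in>{1..k}. i \<le> card {j. j < N \<and> x j \<le> (1 - \<epsilon>1) * (real i - 1) / real N + \<epsilon>1} \<and>
        \<not> i \<le> card {j. j < N \<and> x j < (1 + \<epsilon>2) * real (min i (N - 1)) / real N - \<epsilon>2})"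
    proof (rule ext)
      fix x
      show "g x = (\<forall>i\<in>{1..k}. i \<le> card {j. j < N \<and> x j \<le> (1 - \<epsilon>1) * (real i - 1) / real N + \<epsilon>1} \<and>
        \<not> i \<le> card {j. j < N \<and> x j < (1 + \<epsilon>2) * real (min i (N - 1)) / real N - \<epsilon>2})"
        unfolding g_def
      proof (intro ball_cong refl)
        fix i assume "i \<in> {1..k}"
        then have h1: "1 \<le> i" and h2: "i \<le> N" using kN by auto
        show "((1 - \<epsilon>1) * (real i - 1) / real N + \<epsilon>1 \<ge> order_stat N x i \<and>
            order_stat N x i \<ge> (1 + \<epsilon>2) * real (min i (N - 1)) / real N - \<epsilon>2) =
          (i \<le> card {j. j < N \<and> x j \<le> (1 - \<epsilon>1) * (real i - 1) / real N + \<epsilon>1} \<and>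
            \<not> i \<le> card {j. j < N \<and> x j < (1 + \<epsilon>2) * real (min i (N - 1)) / real N - \<epsilon>2})"
          using os_le[OF h1 h2, of x] os_less[OF h1 h2, of x] by (simp add: not_less[symmetric])
      qed
    qed
    have cm: "(\<lambda>x. x j) \<in> borel_measurable PI" if "j < N" for j
      unfolding PI_def by (rule measurable_component_singleton) (use that in \<open>simp add: I_def\<close>)
    have px1: "Measurable.pred PI (\<lambda>x. x j \<le> a)" if "j < N" for j a
      unfolding pred_def by (rule borel_measurable_le[OF cm[OF that] borel_measurable_const])
    have px2: "Measurable.pred PI (\<lambda>x. x j < a)" if "j < N" for j a
      unfolding pred_def by (rule borel_measurable_less[OF cm[OF that] borel_measurable_const])
    have "Measurable.pred PI g" unfolding geq
      by (intro pred_intros_finite(3) finite_atLeastAtMost pred_intros_logic(3) pred_intros_logic(2)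
          pred_card_le px1 px2)
    then show ?thesis unfolding G_def pred_def .
  qed
  have Vm: "Vv \<in> measurable M PI" unfolding Vv_def PI_def
  proof (rule measurable_restrict)
    fix i assume "i \<in> I" then have "i < N" by (simp add: I_def)
    show "(\<lambda>\<omega>. F (T i \<omega>)) \<in> borel_measurable M" by (rule measurable_compose[OF T_rv[OF \<open>i < N\<close>] Fm])
  qed
  have Um: "Uv \<in> measurable M' PI" unfolding Uv_def PI_def
  proof (rule measurable_restrict)
    fix i assume "i \<in> I" then have "i < N" by (simp add: I_def)
    show "U i \<in> borel_measurable M'" by (rule U_rv[OF \<open>i < N\<close>])
  qed
  have UNI_V: "distr M borel (\<lambda>\<omega>. F (T i \<omega>)) = UNI" if "i \<in> I" for i
  proof -
    have iN: "i < N" using that by (simp add: I_def)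
    have "distr M borel (\<lambda>\<omega>. F (T i \<omega>)) = distr (distr M borel (T i)) borel F"
      using distr_distr[OF Fm T_rv[OF iN]] by (simp add: comp_def)
    also have "\<dots> = distr D borel F" unfolding D_def T_id[OF iN] ..
    also have "\<dots> = UNI" unfolding F_def by (rule PIT[OF Drd Fcont[unfolded F_def]])
    finally show ?thesis .
  qed
  have UNI_U: "distr M' borel (U i) = UNI" if "i \<in> I" for i
  proof -
    have iN: "i < N" using that by (simp add: I_def)
    have "distr M' borel (U i) = distr M' lborel (U i)" by (rule distr_cong) auto
    then show ?thesis using U_unif[OF iN] by simp
  qed
  have indV: "P.indep_vars (\<lambda>_. borel) (\<lambda>i \<omega>. F (T i \<omega>)) I"
    unfolding I_def by (rule P.indep_vars_compose2[OF T_indep, of "\<lambda>_. F" "\<lambda>_. borel"]) (rule Fm)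
  have distV: "distr M PI Vv = PiM I (\<lambda>_. UNI)"
  proof -
    have "distr M PI Vv = PiM I (\<lambda>i. distr M borel (\<lambda>\<omega>. F (T i \<omega>)))"
      unfolding PI_def Vv_def
    proof (rule P.indep_vars_iff_distr_eq_PiM'[OF Ine, THEN iffD1, OF _ indV])
      fix i assume "i \<in> I" then have "i < N" by (simp add: I_def)
      show "(\<lambda>\<omega>. F (T i \<omega>)) \<in> borel_measurable M" by (rule measurable_compose[OF T_rv[OF \<open>i < N\<close>] Fm])
    qed
    also have "\<dots> = PiM I (\<lambda>_. UNI)" by (rule PiM_cong) (simp_all add: UNI_V)
    finally show ?thesis .
  qed
  have distU: "distr M' PI Uv = PiM I (\<lambda>_. UNI)"
  proof -
    have indU: "P'.indep_vars (\<lambda>_. borel) U I" using U_indep unfolding I_def .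
    have "distr M' PI Uv = PiM I (\<lambda>i. distr M' borel (U i))"
      unfolding PI_def Uv_def
    proof (rule P'.indep_vars_iff_distr_eq_PiM'[OF Ine, THEN iffD1, OF _ indU])
      fix i assume "i \<in> I" then have "i < N" by (simp add: I_def)
      show "U i \<in> borel_measurable M'" by (rule U_rv[OF \<open>i < N\<close>])
    qed
    also have "\<dots> = PiM I (\<lambda>_. UNI)" by (rule PiM_cong) (simp_all add: UNI_U)
    finally show ?thesis .
  qed
  have EU: "{\<omega> \<in> space M'. \<forall>i\<in>{1..k}.
        (1 - \<epsilon>1) * (real i - 1) / real N + \<epsilon>1 \<ge> order_stat N (\<lambda>j. U j \<omega>) i \<and>
        order_stat N (\<lambda>j. U j \<omega>) i \<ge> (1 + \<epsilon>2) * real (min i (N - 1)) / real N - \<epsilon>2}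
      = Uv -` G \<inter> space M'"
  proof (intro set_eqI iffI)
    fix \<omega>
    have os: "order_stat N (Uv \<omega>) i = order_stat N (\<lambda>j. U j \<omega>) i" for i
      by (rule os_cong) (simp add: Uv_def I_def)
    {
      assume "\<omega> \<in> {\<omega> \<in> space M'. \<forall>i\<in>{1..k}.
        (1 - \<epsilon>1) * (real i - 1) / real N + \<epsilon>1 \<ge> order_stat N (\<lambda>j. U j \<omega>) i \<and>
        order_stat N (\<lambda>j. U j \<omega>) i \<ge> (1 + \<epsilon>2) * real (min i (N - 1)) / real N - \<epsilon>2}"
      then show "\<omega> \<in> Uv -` G \<inter> space M'"
        using measurable_space[OF Um, of \<omega>] unfolding G_def g_def by (auto simp: os)
    next
      assume "\<omega> \<in> Uv -` G \<inter> space M'"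
      then show "\<omega> \<in> {\<omega> \<in> space M'. \<forall>i\<in>{1..k}.
        (1 - \<epsilon>1) * (real i - 1) / real N + \<epsilon>1 \<ge> order_stat N (\<lambda>j. U j \<omega>) i \<and>
        order_stat N (\<lambda>j. U j \<omega>) i \<ge> (1 + \<epsilon>2) * real (min i (N - 1)) / real N - \<epsilon>2}"
        unfolding G_def g_def by (auto simp: os)
    }
  qed
  have incl: "AE \<omega> in M. \<omega> \<in> Vv -` G \<inter> space M \<longrightarrow> \<omega> \<in> LHS"
  proof (rule AE_mp[OF noties AE_I2], intro impI)
    fix \<omega> assume om: "\<omega> \<in> space M" and nt: "\<forall>s::nat. \<forall>j. j < N \<longrightarrow> T j \<omega> \<noteq> real s"
      and inG: "\<omega> \<in> Vv -` G \<inter> space M"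
    have os: "order_stat N (Vv \<omega>) i = order_stat N (\<lambda>j. F (T j \<omega>)) i" for i
      by (rule os_cong) (simp add: Vv_def I_def)
    have gV: "\<forall>i\<in>{1..k}. (1 - \<epsilon>1) * (real i - 1) / real N + \<epsilon>1 \<ge> order_stat N (\<lambda>j. F (T j \<omega>)) i \<and>
        order_stat N (\<lambda>j. F (T j \<omega>)) i \<ge> (1 + \<epsilon>2) * real (min i (N - 1)) / real N - \<epsilon>2"
      using inG unfolding G_def g_def by (auto simp: os)
    have "Q' \<omega>" unfolding Q'_def
    proof (intro allI impI)
      fix s :: nat assume as: "1 \<le> s \<and> \<not> k \<le> card {j. j < N \<and> T j \<omega> < real s}"
      have d: "card {j. j < N \<and> T j \<omega> > real s} > 0 \<and>
        (1 + \<epsilon>2) * C0 \<ge> C0 * real N * (1 - F (real s)) / real (card {j. j < N \<and> T j \<omega> > real s}) \<and>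
        C0 * real N * (1 - F (real s)) / real (card {j. j < N \<and> T j \<omega> > real s}) \<ge> (1 - \<epsilon>1) * C0"
        by (rule det[where T="\<lambda>j. T j \<omega>" and F=F, OF Fmono F0 k1 kN e1 e2 C0pos _ gV])
           (use nt as in auto)
      then show "\<Phi> s (card {j. j < N \<and> T j \<omega> > real s})"
        unfolding \<Phi>_def cc_def S_eq by simp
    qed
    then show "\<omega> \<in> LHS" unfolding LHS_eq using om by simp
  qed
  have "measure M' {\<omega> \<in> space M'. \<forall>i\<in>{1..k}.
        (1 - \<epsilon>1) * (real i - 1) / real N + \<epsilon>1 \<ge> order_stat N (\<lambda>j. U j \<omega>) i \<and>
        order_stat N (\<lambda>j. U j \<omega>) i \<ge> (1 + \<epsilon>2) * real (min i (N - 1)) / real N - \<epsilon>2}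
      = measure M' (Uv -` G \<inter> space M')" unfolding EU ..
  also have "\<dots> = measure (distr M' PI Uv) G" by (rule measure_distr[OF Um Gm, symmetric])
  also have "\<dots> = measure (distr M PI Vv) G" unfolding distU distV ..
  also have "\<dots> = measure M (Vv -` G \<inter> space M)" by (rule measure_distr[OF Vm Gm])
  also have "\<dots> \<le> measure M LHS" by (rule P.finite_measure_mono_AE[OF incl LHSm])
  finally show ?thesis unfolding LHS_def .
qed

end
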